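(* Let $\gamma\in\mathbb{R}$ and $|a|$ small. The operator $\mathcal Q_a(\mu,\gamma)$ is not invertible in $L^2_0(\mathbb{T})$ for some $\mu\in\mathbb{C}$ if and only if $\mu$ belongs to the $L^2_0(\mathbb{T})$-spectrum of the operator $$\mathcal H_a(\gamma)=ck\partial_z+k^3\partial_z^3+6k\rho\,\partial_z(w\,\cdot)-\tfrac32\phi^2k\,\partial_z(w^2\,\cdot)-\frac{3\gamma^2}{k}\partial_z^{-1}-3i\phi\gamma\, w_z\,\partial_z^{-1}.$$
   Context: Here $\rho,\phi\in\mathbb{R}$, $k>0$, and $w$, $c$ describe the small-amplitude periodic traveling wave of the Konopelchenko–Dubrovsky equation: $w$ is smooth, real, even and $2\pi$-periodic, $w(z)=a\cos z+a^2(A_0+A_2\cos 2z)+a^3A_3\cos 3z+O(a^4)$, $c=k^2+a^2c_2+O(a^4)$, with $A_0=-\frac{3\rho}{2k^2}$, $A_2=\frac{\rho}{2k^2}$, $A_3=-\frac{\phi^2}{64k^2}+\frac{3\rho^2}{16k^4}$, $c_2=\frac{3\phi^2}{8}+\frac{15\rho^2}{2k^2}$. $L^2_0(\mathbb{T})$ is the space of $2\pi$-periodic square-integrable functions with zero mean, on which $\partial_z$ is invertible; $\mathcal H_a(\gamma)$ acts in $L^2_0(\mathbb{T})$ with domain $H^3(\mathbb{T})\cap L^2_0(\mathbb{T})$. The operator $\mathcal Q_a(\mu,\gamma)$ is $\mathcal Q_a(\mu,\gamma)\psi=k\big(\mu-kc\partial_z-k^3\partial_z^3-6k\rho\,\partial_z(w\,\cdot)+\tfrac32\phi^2k\,\partial_z(w^2\cdot)\big)\partial_z\psi+3\gamma^2\psi+3i\phi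 k\gamma w_z\psi$. *)

theory Defs
  imports "HOL-Analysis.Analysis"
begin

text \<open>
  Model of L^2_0(T) via the Fourier (Parseval) unitary isomorphism:
  a 2pi-periodic square integrable zero-mean function psi is represented by
  its Fourier coefficients  psi_hat : int => complex  with psi_hat 0 = 0.
  Under this isomorphism d/dz becomes multiplication by i n, and
  multiplication by a smooth periodic function g becomes convolution with
  the Fourier coefficients of g.
\<close>

definition L2_0 :: "(int \<Rightarrow> complex) set" where
  "L2_0 = {f. f 0 = 0 \<and> (\<lambda>n. (norm (f n))\<^sup>2) summable_on UNIV}"

definition l2norm :: "(int \<Rightarrow> complex) \<Rightarrow> real" where
  "l2norm f = sqrt (\<Sum>\<^sub>\<infinity>n. (norm (f n))\<^sup>2)"

definition Hs0 :: "nat \<Rightarrow> (int \<Rightarrow> complex) set" where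
  "Hs0 s = {f \<in> L2_0. (\<lambda>n. (real_of_int n) ^ (2 * s) * (norm (f n))\<^sup>2) summable_on UNIV}"

definition fcoef :: "(real \<Rightarrow> complex) \<Rightarrow> int \<Rightarrow> complex" where
  "fcoef g n = integral {0..2*pi} (\<lambda>z. g z * exp (- \<i> * of_int n * of_real z)) / of_real (2*pi)"

definition mult_op :: "(real \<Rightarrow> complex) \<Rightarrow> (int \<Rightarrow> complex) \<Rightarrow> (int \<Rightarrow> complex)" where
  "mult_op g f = (\<lambda>n. \<Sum>\<^sub>\<infinity>m. fcoef g (n - m) * f m)"

definition dz :: "(int \<Rightarrow> complex) \<Rightarrow> (int \<Rightarrow> complex)" where
  "dz f = (\<lambda>n. \<i> * of_int n * f n)"

definition dzinv :: "(int \<Rightarrow> complex) \<Rightarrow> (int \<Rightarrow> complex)" where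
  "dzinv f = (\<lambda>n. if n = 0 then 0 else f n / (\<i> * of_int n))"

definition P0 :: "(int \<Rightarrow> complex) \<Rightarrow> (int \<Rightarrow> complex)" where
  "P0 f = f(0 := 0)"

definition invertible_op :: "(int \<Rightarrow> complex) set \<Rightarrow> ((int \<Rightarrow> complex) \<Rightarrow> (int \<Rightarrow> complex)) \<Rightarrow> bool" where
  "invertible_op D T \<longleftrightarrow> bij_betw T D L2_0 \<and> (\<exists>C. \<forall>f\<in>D. l2norm f \<le> C * l2norm (T f))"

definition op_spectrum :: "(int \<Rightarrow> complex) set \<Rightarrow> ((int \<Rightarrow> complex) \<Rightarrow> (int \<Rightarrow> complex)) \<Rightarrow> complex set" where
  "op_spectrum D T = {\<mu>. \<not> invertible_op D (\<lambda>f n. \<mu> * f n - T f n)}"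

definition Hop :: "real \<Rightarrow> real \<Rightarrow> real \<Rightarrow> (real \<Rightarrow> real) \<Rightarrow> real \<Rightarrow> real
                   \<Rightarrow> (int \<Rightarrow> complex) \<Rightarrow> (int \<Rightarrow> complex)" where
  "Hop k \<rho> \<phi> w c \<gamma> f = P0 (\<lambda>n.
       of_real (c * k) * dz f n
     + of_real (k ^ 3) * dz (dz (dz f)) n
     + of_real (6 * k * \<rho>) * dz (mult_op (\<lambda>z. of_real (w z)) f) n
     - of_real (3 / 2 * \<phi>\<^sup>2 * k) * dz (mult_op (\<lambda>z. of_real ((w z)\<^sup>2)) f) n
     - of_real (3 * \<gamma>\<^sup>2 / k) * dzinv f n
     - 3 * \<i> * of_real (\<phi> * \<gamma>) * mult_op (\<lambda>z. of_real (deriv w z)) (dzinv f) n)"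

definition Qop :: "real \<Rightarrow> real \<Rightarrow> real \<Rightarrow> (real \<Rightarrow> real) \<Rightarrow> real \<Rightarrow> complex \<Rightarrow> real
                   \<Rightarrow> (int \<Rightarrow> complex) \<Rightarrow> (int \<Rightarrow> complex)" where
  "Qop k \<rho> \<phi> w c \<mu> \<gamma> f = P0 (\<lambda>n.
       of_real k * (\<mu> * dz f n
         - of_real (k * c) * dz (dz f) n
         - of_real (k ^ 3) * dz (dz (dz (dz f))) n
         - of_real (6 * k * \<rho>) * dz (mult_op (\<lambda>z. of_real (w z)) (dz f)) n
         + of_real (3 / 2 * \<phi>\<^sup>2 * k) * dz (mult_op (\<lambda>z. of_real ((w z)\<^sup>2)) (dz f)) n)
     + of_real (3 * \<gamma>\<^sup>2) * f n
     + 3 * \<i> * of_real (\<phi> * k * \<gamma>) * mult_op (\<lambda>z. of_real (deriv w z)) f n)"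

end

theory Submission
  imports Defs
begin
lemma inv_sq_summable_nat: "(\<lambda>n::nat. 1 / (real n)^2) summable_on UNIV"
proof -
  have "summable (\<lambda>n::nat. inverse (real n ^ 2))" by (rule inverse_power_summable) auto
  then have "summable (\<lambda>n::nat. norm (1 / (real n)^2))" by (simp add: field_simps)
  then show ?thesis by (rule norm_summable_imp_summable_on)
qed

lemma inv_sq_summable: "(\<lambda>n::int. 1 / (real_of_int n)^2) summable_on UNIV"
proof -
  have U: "(UNIV::int set) = int ` UNIV \<union> (\<lambda>n. - int n) ` UNIV"
  proof (intro set_eqI iffI)
    fix x :: int
    show "x \<in> int ` UNIV \<union> (\<lambda>n. - int n) ` UNIV"
    proof (cases "x \<ge> 0")
      case True then have "x = int (nat x)" by simp
      then show ?thesis by blast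
    next
      case False then have "x = - int (nat (-x))" by simp
      then show ?thesis by blast
    qed
  qed simp
  have 1: "(\<lambda>n::int. 1 / (real_of_int n)^2) summable_on int ` UNIV"
    by (subst summable_on_reindex) (auto simp: o_def inv_sq_summable_nat)
  have 2: "(\<lambda>n::int. 1 / (real_of_int n)^2) summable_on (\<lambda>n. - int n) ` UNIV"
    by (subst summable_on_reindex) (auto simp: o_def inv_sq_summable_nat inj_on_def)
  show ?thesis unfolding U by (rule summable_on_union[OF 1 2])
qed

lemma single_le_infsum:
  fixes g :: "int \<Rightarrow> real"
  assumes "g summable_on UNIV" "\<And>n. g n \<ge> 0"
  shows "g n \<le> infsum g UNIV"
proof -
  have "infsum g {n} \<le> infsum g UNIV"
    by (rule infsum_mono_neutral) (use assms in auto)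
  then show ?thesis by simp
qed

lemma pointwise_le_l2:
  assumes "(\<lambda>n. (norm (x n))\<^sup>2) summable_on UNIV"
  shows "norm (x n) \<le> l2norm x"
proof -
  have "(norm (x n))\<^sup>2 \<le> (\<Sum>\<^sub>\<infinity>n. (norm (x n))\<^sup>2)"
    by (rule single_le_infsum[OF assms]) simp
  then show ?thesis unfolding l2norm_def by (simp add: real_le_rsqrt)
qed

lemma l2_le_l1:
  assumes "(\<lambda>n. (norm (x n))\<^sup>2) summable_on UNIV"
    and "(\<lambda>n. norm (x n)) summable_on UNIV"
  shows "l2norm x \<le> (\<Sum>\<^sub>\<infinity>n. norm (x n))"
proof -
  define S where "S = (\<Sum>\<^sub>\<infinity>n. norm (x n))"
  have S0: "S \<ge> 0" unfolding S_def by (rule infsum_nonneg) simp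
  have pt: "norm (x n) \<le> S" for n
    unfolding S_def by (rule single_le_infsum[OF assms(2)]) simp
  have "(\<Sum>\<^sub>\<infinity>n. (norm (x n))\<^sup>2) \<le> (\<Sum>\<^sub>\<infinity>n. S * norm (x n))"
  proof (rule infsum_mono[OF assms(1)])
    show "(\<lambda>n. S * norm (x n)) summable_on UNIV" by (rule summable_on_cmult_right[OF assms(2)])
    fix n show "(norm (x n))\<^sup>2 \<le> S * norm (x n)"
      using pt[of n] by (simp add: power2_eq_square mult_right_mono)
  qed
  also have "\<dots> = S * S" unfolding S_def by (rule infsum_cmult_right') 
  finally have "(\<Sum>\<^sub>\<infinity>n. (norm (x n))\<^sup>2) \<le> S\<^sup>2" by (simp add: power2_eq_square)
  then have "l2norm x \<le> sqrt (S\<^sup>2)" unfolding l2norm_def by (rule real_sqrt_le_mono)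
  then show ?thesis using S0 by (simp add: S_def)
qed

lemma l2norm_scale:
  "l2norm (\<lambda>n. complex_of_real r * x n) = \<bar>r\<bar> * l2norm x"
proof -
  have "(\<Sum>\<^sub>\<infinity>n. (norm (complex_of_real r * x n))\<^sup>2) = (\<Sum>\<^sub>\<infinity>n. r\<^sup>2 * (norm (x n))\<^sup>2)"
    by (simp add: norm_mult power_mult_distrib)
  also have "\<dots> = r\<^sup>2 * (\<Sum>\<^sub>\<infinity>n. (norm (x n))\<^sup>2)" by (rule infsum_cmult_right')
  finally show ?thesis unfolding l2norm_def by (simp add: real_sqrt_mult)
qed

lemma mult_op_bound:
  assumes G: "\<And>j. norm (fcoef g j) \<le> G" and G0: "G \<ge> 0"
    and sx: "(\<lambda>m. norm (x m)) summable_on UNIV"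
  shows "norm (mult_op g x n) \<le> G * (\<Sum>\<^sub>\<infinity>m. norm (x m))"
proof -
  have s1: "(\<lambda>m. G * norm (x m)) summable_on UNIV" by (rule summable_on_cmult_right[OF sx])
  have le: "norm (fcoef g (n - m) * x m) \<le> G * norm (x m)" for m
    using G[of "n-m"] by (simp add: norm_mult mult_right_mono)
  have s2: "(\<lambda>m. norm (fcoef g (n - m) * x m)) summable_on UNIV"
    by (rule summable_on_comparison_test[OF s1]) (use le in auto)
  have "norm (mult_op g x n) \<le> (\<Sum>\<^sub>\<infinity>m. norm (fcoef g (n - m) * x m))"
    unfolding mult_op_def by (rule norm_infsum_bound[OF s2])
  also have "\<dots> \<le> (\<Sum>\<^sub>\<infinity>m. G * norm (x m))"
    by (rule infsum_mono[OF s2 s1 le])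
  also have "\<dots> = G * (\<Sum>\<^sub>\<infinity>m. norm (x m))" by (rule infsum_cmult_right')
  finally show ?thesis .
qed

lemma fcoef_bound:
  assumes "continuous_on {0..2*pi} g"
  shows "\<exists>G\<ge>0. \<forall>j. norm (fcoef g j) \<le> G"
proof -
  have "compact (g ` {0..2*pi})" by (rule compact_continuous_image[OF assms]) simp
  then have "bounded (g ` {0..2*pi})" by (rule compact_imp_bounded)
  then obtain B where B': "\<forall>x\<in>g ` {0..2*pi}. norm x \<le> B" unfolding bounded_iff by blast
  then have B: "\<And>z. z \<in> {0..2*pi} \<Longrightarrow> norm (g z) \<le> B" by auto
  have B0: "B \<ge> 0" using B[of 0] pi_ge_zero norm_ge_zero[of "g 0"] by (simp del: norm_ge_zero)
  have "norm (fcoef g j) \<le> B" for j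
  proof -
    let ?h = "\<lambda>z. g z * exp (- \<i> * of_int j * of_real z)"
    have cont: "continuous_on {0..2*pi} ?h"
      by (intro continuous_on_mult assms continuous_on_exp continuous_on_of_real continuous_on_mult_left continuous_on_id)
    have hi: "(?h has_integral integral {0..2*pi} ?h) {0..2*pi}"
      using integrable_continuous_interval[OF cont] by (rule integrable_integral)
    have nb: "norm (?h z) \<le> B" if "z \<in> {0..2*pi} - {}" for z
      using B[of z] that by (simp add: norm_mult)
    have "norm (integral {0..2*pi} ?h) \<le> B * (2*pi)"
      using has_integral_bound_real[OF B0 finite.emptyI hi nb] by simp
    then show ?thesis unfolding fcoef_def
      by (simp add: norm_divide divide_le_eq mult.commute)
  qed
  then show ?thesis using B0 by blast
qed

lemma int_sq_ge1: assumes "n \<noteq> 0" shows "(real_of_int n) ^ 2 \<ge> 1"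
proof -
  have "1 \<le> \<bar>n\<bar>" using assms by linarith
  then have "1 \<le> \<bar>real_of_int n\<bar>" by (metis of_int_1_le_iff of_int_abs)
  then have "1 \<le> \<bar>real_of_int n\<bar> ^ 2" by (rule one_le_power)
  then show ?thesis by simp
qed

lemma int_sq_pow: assumes "s \<ge> 1" shows "(real_of_int n) ^ 2 \<le> (real_of_int n) ^ (2 * s)"
proof (cases "n = 0")
  case True then show ?thesis using assms by simp
next
  case False
  then have h: "(real_of_int n) ^ 2 \<ge> 1" by (rule int_sq_ge1)
  have "((real_of_int n) ^ 2)^1 \<le> ((real_of_int n) ^ 2)^s" by (rule power_increasing[OF assms h])
  then show ?thesis by (simp add: power_mult)
qed

lemma sq_le_int_sq: "(x::real) \<ge> 0 \<Longrightarrow> x \<le> (real_of_int n) ^ 2 * x \<or> n = 0"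
proof (cases "n = 0")
  case False
  assume x: "x \<ge> 0"
  have "1 * x \<le> (real_of_int n) ^ 2 * x" by (rule mult_right_mono[OF int_sq_ge1[OF False] x])
  then show ?thesis by simp
qed simp

lemma amgm_aux: assumes "(x::real) \<ge> 0" "t \<ge> 1" shows "x \<le> t^3 * x^2 + 1/t"
proof (cases "x * t \<le> 1")
  case True
  then have "x \<le> 1/t" using assms by (simp add: field_simps)
  moreover have "t^3 * x^2 \<ge> 0" using assms by simp
  ultimately show ?thesis by linarith
next
  case False
  then have "x * t \<ge> 1" by simp
  then have a: "t^2 * x * (x * t) \<ge> t^2 * x * 1" using assms by (intro mult_left_mono) auto
  have "t^2 \<ge> 1" using assms(2) by (rule one_le_power)
  then have b: "1 * x \<le> t^2 * x" using assms(1) by (rule mult_right_mono)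
  have c: "1/t \<ge> 0" using assms by simp
  have d: "t^3 * x^2 = t^2 * x * (x * t)" by (simp add: power2_eq_square power3_eq_cube)
  show ?thesis using a b c d by linarith
qed

lemma dzinv_dz: "g 0 = 0 \<Longrightarrow> dzinv (dz g) = g"
  by (auto simp: dzinv_def dz_def fun_eq_iff)

lemma dz_dzinv: "f 0 = 0 \<Longrightarrow> dz (dzinv f) = f"
  by (auto simp: dzinv_def dz_def fun_eq_iff)

lemma Hs0_zero: "f \<in> Hs0 s \<Longrightarrow> f 0 = 0"
  by (simp add: Hs0_def L2_0_def)

lemma Hs0_L2: "f \<in> Hs0 s \<Longrightarrow> (\<lambda>n. (norm (f n))\<^sup>2) summable_on UNIV"
  by (simp add: Hs0_def L2_0_def)

lemma Hs0_sum: "f \<in> Hs0 s \<Longrightarrow> (\<lambda>n. (real_of_int n) ^ (2 * s) * (norm (f n))\<^sup>2) summable_on UNIV"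
  by (simp add: Hs0_def)

lemma norm_dz_sq: "(norm (dz g n))\<^sup>2 = (real_of_int n) ^ 2 * (norm (g n))\<^sup>2"
  by (simp add: dz_def norm_mult power_mult_distrib)

lemma dz_Hs: assumes "g \<in> Hs0 4" shows "dz g \<in> Hs0 3"
proof -
  have s8: "(\<lambda>n. (real_of_int n) ^ (2 * 4) * (norm (g n))\<^sup>2) summable_on UNIV" by (rule Hs0_sum[OF assms])
  have "(\<lambda>n. (norm (dz g n))\<^sup>2) summable_on UNIV"
  proof (rule summable_on_comparison_test[OF s8])
    fix n :: int
    show "(norm (dz g n))\<^sup>2 \<le> (real_of_int n) ^ (2 * 4) * (norm (g n))\<^sup>2"
      unfolding norm_dz_sq by (rule mult_right_mono[OF int_sq_pow]) auto
  qed simp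
  moreover have "(\<lambda>n. (real_of_int n) ^ (2 * 3) * (norm (dz g n))\<^sup>2) summable_on UNIV"
    using s8 by (simp add: norm_dz_sq power_add[symmetric] mult.assoc[symmetric])
  ultimately show ?thesis by (simp add: Hs0_def L2_0_def dz_def)
qed

lemma dzinv_Hs: assumes "f \<in> Hs0 3" shows "dzinv f \<in> Hs0 4"
proof -
  have f0: "f 0 = 0" by (rule Hs0_zero[OF assms])
  have s2: "(\<lambda>n. (norm (f n))\<^sup>2) summable_on UNIV" by (rule Hs0_L2[OF assms])
  have s6: "(\<lambda>n. (real_of_int n) ^ (2 * 3) * (norm (f n))\<^sup>2) summable_on UNIV" by (rule Hs0_sum[OF assms])
  have eq: "(norm (f n))\<^sup>2 = (real_of_int n) ^ 2 * (norm (dzinv f n))\<^sup>2" for n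
    using f0 by (cases "n = 0") (auto simp: dzinv_def norm_divide norm_mult power_divide)
  have "(\<lambda>n. (norm (dzinv f n))\<^sup>2) summable_on UNIV"
  proof (rule summable_on_comparison_test[OF s2])
    fix n :: int
    show "(norm (dzinv f n))\<^sup>2 \<le> (norm (f n))\<^sup>2"
      unfolding eq using sq_le_int_sq[of "(norm (dzinv f n))\<^sup>2" n]
      by (auto simp: dzinv_def)
  qed simp
  moreover have "(\<lambda>n. (real_of_int n) ^ (2 * 4) * (norm (dzinv f n))\<^sup>2) summable_on UNIV"
  proof -
    have "(real_of_int n) ^ (2 * 4) * (norm (dzinv f n))\<^sup>2 = (real_of_int n) ^ (2 * 3) * (norm (f n))\<^sup>2" for n
      unfolding eq by (simp add: power_add[symmetric] mult.assoc[symmetric])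
    then show ?thesis using s6 by simp
  qed
  ultimately show ?thesis by (simp add: Hs0_def L2_0_def dzinv_def)
qed

lemma l1_Hs3: assumes "f \<in> Hs0 3" shows "(\<lambda>n. norm (f n)) summable_on UNIV"
proof -
  have f0: "f 0 = 0" by (rule Hs0_zero[OF assms])
  have s6: "(\<lambda>n. (real_of_int n) ^ (2 * 3) * (norm (f n))\<^sup>2) summable_on UNIV" by (rule Hs0_sum[OF assms])
  have ss: "(\<lambda>n. (real_of_int n) ^ (2 * 3) * (norm (f n))\<^sup>2 + 1 / (real_of_int n) ^ 2) summable_on UNIV"
    by (rule summable_on_add[OF s6 inv_sq_summable])
  show ?thesis
  proof (rule summable_on_comparison_test[OF ss])
    fix n :: int
    show "norm (f n) \<le> (real_of_int n) ^ (2 * 3) * (norm (f n))\<^sup>2 + 1 / (real_of_int n) ^ 2"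
    proof (cases "n = 0")
      case True then show ?thesis using f0 by simp
    next
      case False
      then have "(real_of_int n) ^ 2 \<ge> 1" by (rule int_sq_ge1)
      from amgm_aux[OF norm_ge_zero this, of "f n"] show ?thesis
        by (simp add: power_mult[symmetric])
    qed
  qed simp
qed

lemma l2_le_dz: assumes "g \<in> Hs0 4" shows "l2norm g \<le> l2norm (dz g)"
proof -
  have "(\<Sum>\<^sub>\<infinity>n. (norm (g n))\<^sup>2) \<le> (\<Sum>\<^sub>\<infinity>n. (norm (dz g n))\<^sup>2)"
  proof (rule infsum_mono[OF Hs0_L2[OF assms] Hs0_L2[OF dz_Hs[OF assms]]])
    fix n show "(norm (g n))\<^sup>2 \<le> (norm (dz g n))\<^sup>2"
      unfolding norm_dz_sq using sq_le_int_sq[of "(norm (g n))\<^sup>2" n] Hs0_zero[OF assms] by auto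
  qed
  then show ?thesis unfolding l2norm_def by (rule real_sqrt_le_mono)
qed

lemma Q_eq:
  assumes k: "k \<noteq> 0" and g0: "g 0 = 0"
  shows "Qop k \<rho> \<phi> W c \<mu> \<gamma> g = (\<lambda>n. complex_of_real k * (\<mu> * dz g n - Hop k \<rho> \<phi> W c \<gamma> (dz g) n))"
proof
  fix n :: int
  show "Qop k \<rho> \<phi> W c \<mu> \<gamma> g n = complex_of_real k * (\<mu> * dz g n - Hop k \<rho> \<phi> W c \<gamma> (dz g) n)"
  proof (cases "n = 0")
    case True then show ?thesis by (simp add: Qop_def Hop_def P0_def dz_def)
  next
    case False
    have kc: "complex_of_real k \<noteq> 0" using k by simp
    show ?thesis using False kc unfolding Qop_def Hop_def P0_def dzinv_dz[of g, OF g0]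
      by (simp add: field_simps)
  qed
qed

definition Rop :: "real \<Rightarrow> real \<Rightarrow> real \<Rightarrow> (real \<Rightarrow> real) \<Rightarrow> real \<Rightarrow> (int \<Rightarrow> complex) \<Rightarrow> int \<Rightarrow> complex" where
  "Rop k \<rho> \<phi> W \<gamma> f n =
       of_real (6 * k * \<rho>) * dz (mult_op (\<lambda>z. of_real (W z)) f) n
     - of_real (3 / 2 * \<phi>\<^sup>2 * k) * dz (mult_op (\<lambda>z. of_real ((W z)\<^sup>2)) f) n
     - of_real (3 * \<gamma>\<^sup>2 / k) * dzinv f n
     - 3 * \<i> * of_real (\<phi> * \<gamma>) * mult_op (\<lambda>z. of_real (deriv W z)) (dzinv f) n"

lemma H_expand:
  assumes "n \<noteq> 0"
  shows "Hop k \<rho> \<phi> W c \<gamma> f n = \<i> * of_real (c * k * of_int n - k^3 * (of_int n)^3) * f n + Rop k \<rho> \<phi> W \<gamma> f n"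
  using assms unfolding Hop_def P0_def Rop_def dz_def
  by (simp add: algebra_simps power3_eq_cube)

lemma norm_dzinv_le: "norm (dzinv f n) \<le> norm (f n)"
proof (cases "n = 0")
  case False
  have "1 \<le> \<bar>real_of_int n\<bar>" using False by (metis int_one_le_iff_zero_less of_int_1_le_iff of_int_abs zero_less_abs_iff)
  have p: "0 < \<bar>real_of_int n\<bar>" using False by simp
  have "norm (f n) \<le> \<bar>real_of_int n\<bar> * norm (f n)" using mult_right_mono[OF \<open>1 \<le> _\<close> norm_ge_zero[of "f n"]] by simp
  then have "norm (f n) / \<bar>real_of_int n\<bar> \<le> norm (f n)" by (simp add: pos_divide_le_eq[OF p] mult.commute)
  then show ?thesis using False by (simp add: dzinv_def norm_divide norm_mult)
qed (simp add: dzinv_def)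

lemma R_bound:
  assumes G0: "\<And>j. norm (fcoef (\<lambda>z. complex_of_real (W z)) j) \<le> G0" "G0 \<ge> 0"
    and G1: "\<And>j. norm (fcoef (\<lambda>z. complex_of_real ((W z)\<^sup>2)) j) \<le> G1" "G1 \<ge> 0"
    and G2: "\<And>j. norm (fcoef (\<lambda>z. complex_of_real (deriv W z)) j) \<le> G2" "G2 \<ge> 0"
    and k: "k > 0" and f: "f \<in> Hs0 3" and n: "n \<noteq> 0"
  shows "norm (Rop k \<rho> \<phi> W \<gamma> f n) \<le> \<bar>real_of_int n\<bar> *
           (6 * k * \<bar>\<rho>\<bar> * G0 + 3 / 2 * \<phi>\<^sup>2 * k * G1 + 3 * \<gamma>\<^sup>2 / k + 3 * \<bar>\<phi> * \<gamma>\<bar> * G2)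
           * (\<Sum>\<^sub>\<infinity>m. norm (f m))"
proof -
  define S where "S = (\<Sum>\<^sub>\<infinity>m. norm (f m))"
  have sf: "(\<lambda>m. norm (f m)) summable_on UNIV" by (rule l1_Hs3[OF f])
  have S0: "S \<ge> 0" unfolding S_def by (rule infsum_nonneg) simp
  have sd: "(\<lambda>m. norm (dzinv f m)) summable_on UNIV"
    by (rule summable_on_comparison_test[OF sf]) (auto simp: norm_dzinv_le)
  have Sd: "(\<Sum>\<^sub>\<infinity>m. norm (dzinv f m)) \<le> S"
    unfolding S_def by (rule infsum_mono[OF sd sf]) (rule norm_dzinv_le)
  have fn: "norm (f n) \<le> S" unfolding S_def by (rule single_le_infsum[OF sf]) simp
  have n1: "1 \<le> \<bar>real_of_int n\<bar>" using n by (metis int_one_le_iff_zero_less of_int_1_le_iff of_int_abs zero_less_abs_iff)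
  have t1: "norm (of_real (6 * k * \<rho>) * dz (mult_op (\<lambda>z. complex_of_real (W z)) f) n)
      \<le> \<bar>real_of_int n\<bar> * (6 * k * \<bar>\<rho>\<bar> * G0) * S"
  proof -
    have "norm (mult_op (\<lambda>z. complex_of_real (W z)) f n) \<le> G0 * S"
      unfolding S_def by (rule mult_op_bound[OF G0 sf])
    then have "(6 * k * \<bar>\<rho>\<bar> * \<bar>real_of_int n\<bar>) * norm (mult_op (\<lambda>z. complex_of_real (W z)) f n) \<le> (6 * k * \<bar>\<rho>\<bar> * \<bar>real_of_int n\<bar>) * (G0 * S)"
      using k by (intro mult_left_mono) auto
    then show ?thesis using k by (simp add: dz_def norm_mult abs_mult mult_ac)
  qed
  have t2: "norm (of_real (3 / 2 * \<phi>\<^sup>2 * k) * dz (mult_op (\<lambda>z. complex_of_real ((W z)\<^sup>2)) f) n)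
      \<le> \<bar>real_of_int n\<bar> * (3 / 2 * \<phi>\<^sup>2 * k * G1) * S"
  proof -
    have "norm (mult_op (\<lambda>z. complex_of_real ((W z)\<^sup>2)) f n) \<le> G1 * S"
      unfolding S_def by (rule mult_op_bound[OF G1 sf])
    then have "(3 / 2 * \<phi>\<^sup>2 * k * \<bar>real_of_int n\<bar>) * norm (mult_op (\<lambda>z. complex_of_real ((W z)\<^sup>2)) f n) \<le> (3 / 2 * \<phi>\<^sup>2 * k * \<bar>real_of_int n\<bar>) * (G1 * S)"
      using k by (intro mult_left_mono) auto
    then show ?thesis using k by (simp add: dz_def norm_mult abs_mult mult_ac norm_power)
  qed
  have t3: "norm (of_real (3 * \<gamma>\<^sup>2 / k) * dzinv f n) \<le> \<bar>real_of_int n\<bar> * (3 * \<gamma>\<^sup>2 / k) * S"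
  proof -
    have "norm (dzinv f n) \<le> \<bar>real_of_int n\<bar> * S"
      using norm_dzinv_le[of f n] fn n1 S0 by (smt (verit) mult_le_cancel_right1)
    then have "(3 * \<gamma>\<^sup>2 / k) * norm (dzinv f n) \<le> (3 * \<gamma>\<^sup>2 / k) * (\<bar>real_of_int n\<bar> * S)"
      using k by (intro mult_left_mono) auto
    moreover have "norm (complex_of_real (3 * \<gamma>\<^sup>2 / k) * dzinv f n) = (3 * \<gamma>\<^sup>2 / k) * norm (dzinv f n)"
      using k by (simp only: norm_mult norm_of_real) simp
    ultimately show ?thesis by (simp add: mult_ac)
  qed
  have t4: "norm (3 * \<i> * of_real (\<phi> * \<gamma>) * mult_op (\<lambda>z. complex_of_real (deriv W z)) (dzinv f) n)
      \<le> \<bar>real_of_int n\<bar> * (3 * \<bar>\<phi> * \<gamma>\<bar> * G2) * S"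
  proof -
    have "norm (mult_op (\<lambda>z. complex_of_real (deriv W z)) (dzinv f) n) \<le> G2 * (\<Sum>\<^sub>\<infinity>m. norm (dzinv f m))"
      by (rule mult_op_bound[OF G2 sd])
    also have "\<dots> \<le> G2 * S" using Sd G2(2) by (rule mult_left_mono)
    also have "\<dots> \<le> \<bar>real_of_int n\<bar> * (G2 * S)" using mult_right_mono[OF n1, of "G2 * S"] G2(2) S0 by simp
    finally have "(3 * \<bar>\<phi> * \<gamma>\<bar>) * norm (mult_op (\<lambda>z. complex_of_real (deriv W z)) (dzinv f) n) \<le> (3 * \<bar>\<phi> * \<gamma>\<bar>) * (\<bar>real_of_int n\<bar> * (G2 * S))"
      by (intro mult_left_mono) auto
    then show ?thesis by (simp add: norm_mult mult_ac abs_mult)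
  qed
  have "norm (Rop k \<rho> \<phi> W \<gamma> f n) \<le>
      norm (of_real (6 * k * \<rho>) * dz (mult_op (\<lambda>z. complex_of_real (W z)) f) n)
    + norm (of_real (3 / 2 * \<phi>\<^sup>2 * k) * dz (mult_op (\<lambda>z. complex_of_real ((W z)\<^sup>2)) f) n)
    + norm (of_real (3 * \<gamma>\<^sup>2 / k) * dzinv f n)
    + norm (3 * \<i> * of_real (\<phi> * \<gamma>) * mult_op (\<lambda>z. complex_of_real (deriv W z)) (dzinv f) n)"
    unfolding Rop_def by (smt (verit) norm_triangle_ineq4)
  also have "\<dots> \<le> \<bar>real_of_int n\<bar> * (6 * k * \<bar>\<rho>\<bar> * G0) * S + \<bar>real_of_int n\<bar> * (3 / 2 * \<phi>\<^sup>2 * k * G1) * S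
     + \<bar>real_of_int n\<bar> * (3 * \<gamma>\<^sup>2 / k) * S + \<bar>real_of_int n\<bar> * (3 * \<bar>\<phi> * \<gamma>\<bar> * G2) * S"
    using t1 t2 t3 t4 by linarith
  also have "\<dots> = \<bar>real_of_int n\<bar> *
           (6 * k * \<bar>\<rho>\<bar> * G0 + 3 / 2 * \<phi>\<^sup>2 * k * G1 + 3 * \<gamma>\<^sup>2 / k + 3 * \<bar>\<phi> * \<gamma>\<bar> * G2) * S"
    by (simp add: algebra_simps)
  finally show ?thesis unfolding S_def .
qed

lemma high_real:
  fixes k r c m y \<tau> B X :: real
  assumes k: "k > 0" and r: "r \<ge> 1" and big: "k^2 * r \<ge> 2 * (\<bar>c\<bar> + m / k)"
    and m: "m \<ge> 0" and y: "y \<ge> 0" and t: "\<tau> \<ge> 0" and B: "B \<ge> 0"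
    and X: "X \<ge> k * r * (k^2 * r^2 - \<bar>c\<bar>)"
    and ineq: "(X - m) * y \<le> \<tau> + r * B"
  shows "y \<le> (\<tau> + B) * (2 / (k^3 * r^2))"
proof -
  have r2: "r^2 \<ge> r" using r by (simp add: power2_eq_square)
  have "k^2 * r^2 \<ge> k^2 * r" using r2 by (intro mult_left_mono) auto
  moreover have "2 * \<bar>c\<bar> + 2 * (m / k) \<le> k^2 * r" using big by (simp add: distrib_left)
  ultimately have a: "2 * (m / k) \<le> k^2 * r^2 - 2 * \<bar>c\<bar>" by linarith
  have kr: "k * r \<ge> 0" using k r by simp
  have "k * r * (2 * (m / k)) \<le> k * r * (k^2 * r^2 - 2 * \<bar>c\<bar>)" using a kr by (rule mult_left_mono)
  moreover have "k * r * (2 * (m / k)) = 2 * (r * m)" using k by simp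
  moreover have "1 * m \<le> r * m" using r m by (rule mult_right_mono)
  ultimately have b: "k * r * (k^2 * r^2 - 2 * \<bar>c\<bar>) \<ge> 2 * m" by linarith
  have e: "2 * (k * r * (k^2 * r^2 - \<bar>c\<bar>)) = k^3 * r^3 + k * r * (k^2 * r^2 - 2 * \<bar>c\<bar>)"
    by (simp add: algebra_simps power2_eq_square power3_eq_cube)
  have D: "X - m \<ge> k^3 * r^3 / 2"
  proof -
    define P where "P = k * r * (k^2 * r^2 - \<bar>c\<bar>)"
    define Q where "Q = k * r * (k^2 * r^2 - 2 * \<bar>c\<bar>)"
    define T where "T = k^3 * r^3"
    have "X \<ge> P" "Q \<ge> 2 * m" "2 * P = T + Q" using X b e unfolding P_def Q_def T_def by auto
    then show ?thesis unfolding T_def[symmetric] by linarith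
  qed
  have Dpos: "k^3 * r^3 / 2 > 0" using k r by simp
  have "(k^3 * r^3 / 2) * y \<le> (X - m) * y" using D y by (rule mult_right_mono)
  also have "\<dots> \<le> \<tau> + r * B" by (rule ineq)
  also have "\<dots> \<le> r * (\<tau> + B)"
  proof -
    have "1 * \<tau> \<le> r * \<tau>" using r t by (rule mult_right_mono)
    then show ?thesis by (simp add: distrib_left)
  qed
  finally have "(k^3 * r^3 / 2) * y \<le> r * (\<tau> + B)" .
  then have "y \<le> r * (\<tau> + B) / (k^3 * r^3 / 2)" using Dpos by (simp add: pos_le_divide_eq mult.commute)
  also have "\<dots> = (\<tau> + B) * (2 / (k^3 * r^2))" using k r by (simp add: field_simps power2_eq_square power3_eq_cube)
  finally show ?thesis .
qed

lemma h_summable: "(\<lambda>n::int. 2 / (k^3 * (real_of_int n)^2)) summable_on UNIV"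
proof -
  have "(\<lambda>n::int. (2 / k^3) * (1 / (real_of_int n)^2)) summable_on UNIV"
    by (rule summable_on_cmult_right[OF inv_sq_summable])
  then show ?thesis by simp
qed

lemma elliptic:
  fixes W :: "real \<Rightarrow> real" and \<mu> :: complex
  assumes k: "k > 0"
    and G0: "\<And>j. norm (fcoef (\<lambda>z. complex_of_real (W z)) j) \<le> G0" "G0 \<ge> 0"
    and G1: "\<And>j. norm (fcoef (\<lambda>z. complex_of_real ((W z)\<^sup>2)) j) \<le> G1" "G1 \<ge> 0"
    and G2: "\<And>j. norm (fcoef (\<lambda>z. complex_of_real (deriv W z)) j) \<le> G2" "G2 \<ge> 0"
  shows "\<exists>K1 K2. K1 \<ge> 0 \<and> (\<forall>f\<in>Hs0 3. (\<lambda>n. \<mu> * f n - Hop k \<rho> \<phi> W c \<gamma> f n) \<in> L2_0 \<longrightarrow>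
           l2norm f \<le> K1 * l2norm (dzinv f) + K2 * l2norm (\<lambda>n. \<mu> * f n - Hop k \<rho> \<phi> W c \<gamma> f n))"
proof -
  define A where "A = 6 * k * \<bar>\<rho>\<bar> * G0 + 3 / 2 * \<phi>\<^sup>2 * k * G1 + 3 * \<gamma>\<^sup>2 / k + 3 * \<bar>\<phi> * \<gamma>\<bar> * G2"
  have A0: "A \<ge> 0" unfolding A_def using k G0(2) G1(2) G2(2) by simp
  define N0 :: nat where "N0 = nat \<lceil>2 * (\<bar>c\<bar> + norm \<mu> / k) / k^2\<rceil> + 1"
  define h where "h = (\<lambda>n::int. 2 / (k^3 * (real_of_int n)^2))"
  have hs: "h summable_on UNIV" unfolding h_def by (rule h_summable)
  have h0: "h n \<ge> 0" for n unfolding h_def using k by simp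
  define \<epsilon> where "\<epsilon> = 1 / (2 * (A + 1))"
  have \<epsilon>0: "\<epsilon> > 0" unfolding \<epsilon>_def using A0 by simp
  obtain F0 where F0: "finite F0" "dist (sum h F0) (infsum h UNIV) \<le> \<epsilon>"
    using infsum_finite_approximation[OF hs \<epsilon>0] by blast
  define N :: nat where "N = N0 + (\<Sum>n\<in>F0. nat \<bar>n\<bar>)"
  define I where "I = {- int N..int N}"
  have finI: "finite I" unfolding I_def by simp
  have F0I: "F0 \<subseteq> I"
  proof
    fix n assume "n \<in> F0"
    then have "nat \<bar>n\<bar> \<le> (\<Sum>n\<in>F0. nat \<bar>n\<bar>)" using F0(1) by (intro member_le_sum) auto
    then have "nat \<bar>n\<bar> \<le> N" unfolding N_def by simp
    then show "n \<in> I" unfolding I_def by auto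
  qed
  define E where "E = infsum h (- I)"
  have hsI: "h summable_on I" using finI by simp
  have hsC: "h summable_on (- I)" by (rule summable_on_subset[OF hs]) simp
  have split: "infsum h UNIV = sum h I + E"
  proof -
    have "infsum h (I \<union> - I) = infsum h I + infsum h (- I)"
      by (rule infsum_Un_disjoint[OF hsI hsC]) auto
    then show ?thesis unfolding E_def using finI by simp
  qed
  have "sum h F0 \<le> sum h I" by (rule sum_mono2[OF finI F0I]) (use h0 in auto)
  moreover have "infsum h UNIV - sum h F0 \<le> \<epsilon>" using F0(2) by (simp add: dist_real_def)
  ultimately have E\<epsilon>: "E \<le> \<epsilon>" using split by linarith
  have E0: "E \<ge> 0" unfolding E_def by (rule infsum_nonneg) (use h0 in auto)
  have AE: "A * E \<le> 1 / 2"
  proof -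
    have "A * E \<le> A * \<epsilon>" using E\<epsilon> A0 by (rule mult_left_mono)
    also have "\<dots> = A / (2 * (A + 1))" unfolding \<epsilon>_def by simp
    also have "\<dots> \<le> 1 / 2" using A0 by (simp add: field_simps)
    finally show ?thesis .
  qed
  define SI where "SI = (\<Sum>n\<in>I. \<bar>real_of_int n\<bar>)"
  have SI0: "2 * SI \<ge> 0" unfolding SI_def by (simp add: sum_nonneg)
  show ?thesis
  proof (intro exI conjI ballI impI, rule SI0)
    fix f assume f: "f \<in> Hs0 3" and Tf: "(\<lambda>n. \<mu> * f n - Hop k \<rho> \<phi> W c \<gamma> f n) \<in> L2_0"
    define T where "T = (\<lambda>n. \<mu> * f n - Hop k \<rho> \<phi> W c \<gamma> f n)"
    define S where "S = (\<Sum>\<^sub>\<infinity>m. norm (f m))"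
    define \<tau> where "\<tau> = l2norm T"
    define Z where "Z = l2norm (dzinv f)"
    have f0: "f 0 = 0" by (rule Hs0_zero[OF f])
    have sf: "(\<lambda>m. norm (f m)) summable_on UNIV" by (rule l1_Hs3[OF f])
    have S0: "S \<ge> 0" unfolding S_def by (rule infsum_nonneg) simp
    have \<tau>0: "\<tau> \<ge> 0" unfolding \<tau>_def l2norm_def by (simp add: infsum_nonneg)
    have Tn: "norm (T n) \<le> \<tau>" for n
      unfolding \<tau>_def by (rule pointwise_le_l2) (use Tf in \<open>simp add: T_def L2_0_def\<close>)
    have low: "norm (f n) \<le> \<bar>real_of_int n\<bar> * Z" for n
    proof -
      have "f n = dz (dzinv f) n" using dz_dzinv[of f, OF f0] by simp
      then have "norm (f n) = \<bar>real_of_int n\<bar> * norm (dzinv f n)" by (simp add: dz_def norm_mult)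
      moreover have "norm (dzinv f n) \<le> Z" unfolding Z_def
        by (rule pointwise_le_l2[OF Hs0_L2[OF dzinv_Hs[OF f]]])
      ultimately show ?thesis by (simp add: mult_left_mono)
    qed
    have high: "norm (f n) \<le> (\<tau> + A * S) * h n" if nI: "n \<notin> I" for n
    proof -
      have nN: "\<bar>n\<bar> > int N" using nI unfolding I_def by auto
      then have n0: "n \<noteq> 0" by auto
      define r where "r = \<bar>real_of_int n\<bar>"
      have "int N0 \<le> int N" unfolding N_def by simp
      then have "int N0 \<le> \<bar>n\<bar>" using nN by linarith
      then have "real_of_int (int N0) \<le> real_of_int \<bar>n\<bar>" by (simp only: of_int_le_iff)
      then have rN: "r \<ge> real N0" unfolding r_def by simp
      have r1: "r \<ge> 1" using rN unfolding N0_def by linarith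
      have "real N0 \<ge> 2 * (\<bar>c\<bar> + norm \<mu> / k) / k^2" unfolding N0_def by linarith
      then have "r \<ge> 2 * (\<bar>c\<bar> + norm \<mu> / k) / k^2" using rN by linarith
      then have big: "k^2 * r \<ge> 2 * (\<bar>c\<bar> + norm \<mu> / k)" using k by (simp add: pos_divide_le_eq mult.commute)
      define X0 where "X0 = c * k * real_of_int n - k^3 * (real_of_int n)^3"
      have Teq: "(\<mu> - \<i> * of_real X0) * f n = T n + Rop k \<rho> \<phi> W \<gamma> f n"
        unfolding T_def H_expand[OF n0] X0_def by (simp add: algebra_simps)
      have Rb: "norm (Rop k \<rho> \<phi> W \<gamma> f n) \<le> r * A * S"
        unfolding r_def A_def S_def by (rule R_bound[OF G0 G1 G2 k f n0])
      have X0abs: "\<bar>X0\<bar> \<ge> k * r * (k^2 * r^2 - \<bar>c\<bar>)"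
      proof -
        have "X0 = k * real_of_int n * (c - k^2 * (real_of_int n)^2)" unfolding X0_def
          by (simp add: algebra_simps power2_eq_square power3_eq_cube)
        then have "\<bar>X0\<bar> = k * r * \<bar>c - k^2 * r^2\<bar>" unfolding r_def using k by (simp add: abs_mult)
        moreover have "\<bar>c - k^2 * r^2\<bar> \<ge> k^2 * r^2 - \<bar>c\<bar>" by linarith
        moreover have "k * r \<ge> 0" using k r1 by simp
        ultimately show ?thesis by (simp add: mult_left_mono)
      qed
      have "(\<bar>X0\<bar> - norm \<mu>) * norm (f n) \<le> norm (\<mu> - \<i> * of_real X0) * norm (f n)"
      proof (rule mult_right_mono)
        have "norm (\<i> * complex_of_real X0) \<le> norm (\<mu> - \<i> * of_real X0) + norm \<mu>"
          by (metis add.commute norm_triangle_ineq4 norm_minus_commute diff_add_cancel norm_triangle_sub)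
        then show "\<bar>X0\<bar> - norm \<mu> \<le> norm (\<mu> - \<i> * of_real X0)" by (simp add: norm_mult)
      qed simp
      also have "\<dots> = norm (T n + Rop k \<rho> \<phi> W \<gamma> f n)" by (simp only: Teq[symmetric] norm_mult)
      also have "\<dots> \<le> \<tau> + r * (A * S)" using norm_triangle_ineq[of "T n" "Rop k \<rho> \<phi> W \<gamma> f n"] Tn[of n] Rb
        by (simp add: mult.assoc)
      finally have ineq: "(\<bar>X0\<bar> - norm \<mu>) * norm (f n) \<le> \<tau> + r * (A * S)" .
      have "norm (f n) \<le> (\<tau> + A * S) * (2 / (k^3 * r^2))"
        by (rule high_real[OF k r1 big norm_ge_zero norm_ge_zero \<tau>0 _ X0abs ineq]) (use A0 S0 in simp)
      moreover have "r^2 = (real_of_int n)^2" unfolding r_def by simp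
      ultimately show ?thesis unfolding h_def by simp
    qed
    have sfI: "(\<lambda>m. norm (f m)) summable_on I" using finI by simp
    have sfC: "(\<lambda>m. norm (f m)) summable_on (- I)" by (rule summable_on_subset[OF sf]) simp
    have Ssplit: "S = (\<Sum>n\<in>I. norm (f n)) + (\<Sum>\<^sub>\<infinity>n\<in>- I. norm (f n))"
    proof -
      have "infsum (\<lambda>m. norm (f m)) (I \<union> - I) = infsum (\<lambda>m. norm (f m)) I + infsum (\<lambda>m. norm (f m)) (- I)"
        by (rule infsum_Un_disjoint[OF sfI sfC]) auto
      then show ?thesis unfolding S_def using finI by simp
    qed
    have lowsum: "(\<Sum>n\<in>I. norm (f n)) \<le> Z * SI"
    proof -
      have "(\<Sum>n\<in>I. norm (f n)) \<le> (\<Sum>n\<in>I. \<bar>real_of_int n\<bar> * Z)" by (rule sum_mono) (rule low)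
      also have "\<dots> = Z * SI" unfolding SI_def by (simp add: sum_distrib_left mult.commute)
      finally show ?thesis .
    qed
    have highsum: "(\<Sum>\<^sub>\<infinity>n\<in>- I. norm (f n)) \<le> (\<tau> + A * S) * E"
    proof -
      have "(\<Sum>\<^sub>\<infinity>n\<in>- I. norm (f n)) \<le> (\<Sum>\<^sub>\<infinity>n\<in>- I. (\<tau> + A * S) * h n)"
        by (rule infsum_mono[OF sfC summable_on_cmult_right[OF hsC]]) (use high in auto)
      also have "\<dots> = (\<tau> + A * S) * E" unfolding E_def by (rule infsum_cmult_right')
      finally show ?thesis .
    qed
    have "S \<le> Z * SI + \<tau> * E + S * (A * E)" using Ssplit lowsum highsum by (simp add: algebra_simps)
    moreover have "S * (A * E) \<le> S * (1/2)" using AE S0 by (rule mult_left_mono)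
    ultimately have SS: "S \<le> 2 * SI * Z + 2 * E * \<tau>" by (simp add: algebra_simps)
    have "l2norm f \<le> S" unfolding S_def by (rule l2_le_l1[OF Hs0_L2[OF f] sf])
    with SS show "l2norm f \<le> (2 * SI) * l2norm (dzinv f) + (2 * E) * l2norm (\<lambda>n. \<mu> * f n - Hop k \<rho> \<phi> W c \<gamma> f n)"
      unfolding Z_def \<tau>_def T_def by simp
  qed
qed

lemma L2_0_scale: "h \<in> L2_0 \<Longrightarrow> (\<lambda>n. complex_of_real r * h n) \<in> L2_0"
proof -
  assume h: "h \<in> L2_0"
  have "(\<lambda>n. r\<^sup>2 * (norm (h n))\<^sup>2) summable_on UNIV"
    by (rule summable_on_cmult_right) (use h in \<open>simp add: L2_0_def\<close>)
  then show ?thesis using h by (simp add: L2_0_def norm_mult power_mult_distrib)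
qed

lemma scale_bij: assumes "r \<noteq> 0" shows "bij_betw (\<lambda>h n. complex_of_real r * h n) L2_0 L2_0"
proof (rule bij_betw_byWitness[where f' = "\<lambda>h n. complex_of_real (1 / r) * h n"])
  show "\<forall>a\<in>L2_0. (\<lambda>n. complex_of_real (1 / r) * (complex_of_real r * a n)) = a"
    using assms by (simp add: fun_eq_iff)
  show "\<forall>a'\<in>L2_0. (\<lambda>n. complex_of_real r * (complex_of_real (1 / r) * a' n)) = a'"
    using assms by (simp add: fun_eq_iff)
  show "(\<lambda>h n. complex_of_real r * h n) ` L2_0 \<subseteq> L2_0" using L2_0_scale by blast
  show "(\<lambda>h n. complex_of_real (1 / r) * h n) ` L2_0 \<subseteq> L2_0" using L2_0_scale by blast
qed

lemma dz_bij: "bij_betw dz (Hs0 4) (Hs0 3)"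
proof (rule bij_betw_byWitness[where f' = dzinv])
  show "\<forall>a\<in>Hs0 4. dzinv (dz a) = a" using dzinv_dz Hs0_zero by blast
  show "\<forall>a'\<in>Hs0 3. dz (dzinv a') = a'" using dz_dzinv Hs0_zero by blast
  show "dz ` Hs0 4 \<subseteq> Hs0 3" using dz_Hs by blast
  show "dzinv ` Hs0 3 \<subseteq> Hs0 4" using dzinv_Hs by blast
qed

lemma dzinv_bij: "bij_betw dzinv (Hs0 3) (Hs0 4)"
proof (rule bij_betw_byWitness[where f' = dz])
  show "\<forall>a\<in>Hs0 4. dzinv (dz a) = a" using dzinv_dz Hs0_zero by blast
  show "\<forall>a'\<in>Hs0 3. dz (dzinv a') = a'" using dz_dzinv Hs0_zero by blast
  show "dz ` Hs0 4 \<subseteq> Hs0 3" using dz_Hs by blast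
  show "dzinv ` Hs0 3 \<subseteq> Hs0 4" using dzinv_Hs by blast
qed

lemma inv_equiv:
  fixes \<mu> :: complex
  assumes k: "k > 0"
    and ell: "\<exists>K1 K2. K1 \<ge> 0 \<and> (\<forall>f\<in>Hs0 3. (\<lambda>n. \<mu> * f n - Hop k \<rho> \<phi> W c \<gamma> f n) \<in> L2_0 \<longrightarrow>
           l2norm f \<le> K1 * l2norm (dzinv f) + K2 * l2norm (\<lambda>n. \<mu> * f n - Hop k \<rho> \<phi> W c \<gamma> f n))"
  shows "invertible_op (Hs0 4) (Qop k \<rho> \<phi> W c \<mu> \<gamma>) \<longleftrightarrow>
         invertible_op (Hs0 3) (\<lambda>f n. \<mu> * f n - Hop k \<rho> \<phi> W c \<gamma> f n)"
proof -
  define Q where "Q = Qop k \<rho> \<phi> W c \<mu> \<gamma>"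
  define T where "T = (\<lambda>f n. \<mu> * f n - Hop k \<rho> \<phi> W c \<gamma> f n)"
  have k0: "k \<noteq> 0" using k by simp
  have QT: "Q g = (\<lambda>n. complex_of_real k * T (dz g) n)" if "g \<in> Hs0 4" for g
    unfolding Q_def T_def by (rule Q_eq[of k g, OF k0 Hs0_zero[OF that]])
  have TQ: "T f = (\<lambda>n. complex_of_real (1 / k) * Q (dzinv f) n)" if f: "f \<in> Hs0 3" for f
  proof -
    have "Q (dzinv f) = (\<lambda>n. complex_of_real k * T f n)"
      using QT[OF dzinv_Hs[OF f]] dz_dzinv[of f, OF Hs0_zero[OF f]] by simp
    then show ?thesis using k0 by (simp add: fun_eq_iff)
  qed
  have bijeq: "bij_betw Q (Hs0 4) L2_0 \<longleftrightarrow> bij_betw T (Hs0 3) L2_0"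
  proof
    assume bQ: "bij_betw Q (Hs0 4) L2_0"
    have sb: "bij_betw (\<lambda>h n. complex_of_real (1 / k) * h n) L2_0 L2_0" by (rule scale_bij) (use k0 in simp)
    have "bij_betw ((\<lambda>h n. complex_of_real (1 / k) * h n) \<circ> (Q \<circ> dzinv)) (Hs0 3) L2_0"
      by (rule bij_betw_trans[OF bij_betw_trans[OF dzinv_bij bQ] sb])
    moreover have "bij_betw ((\<lambda>h n. complex_of_real (1 / k) * h n) \<circ> (Q \<circ> dzinv)) (Hs0 3) L2_0 = bij_betw T (Hs0 3) L2_0"
      by (rule bij_betw_cong) (simp add: TQ)
    ultimately show "bij_betw T (Hs0 3) L2_0" by simp
  next
    assume bT: "bij_betw T (Hs0 3) L2_0"
    have sb: "bij_betw (\<lambda>h n. complex_of_real k * h n) L2_0 L2_0" by (rule scale_bij[OF k0])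
    have "bij_betw ((\<lambda>h n. complex_of_real k * h n) \<circ> (T \<circ> dz)) (Hs0 4) L2_0"
      by (rule bij_betw_trans[OF bij_betw_trans[OF dz_bij bT] sb])
    moreover have "bij_betw ((\<lambda>h n. complex_of_real k * h n) \<circ> (T \<circ> dz)) (Hs0 4) L2_0 = bij_betw Q (Hs0 4) L2_0"
      by (rule bij_betw_cong) (simp add: QT)
    ultimately show "bij_betw Q (Hs0 4) L2_0" by simp
  qed
  have normQ: "l2norm (Q g) = k * l2norm (T (dz g))" if "g \<in> Hs0 4" for g
    using QT[OF that] l2norm_scale[of k "T (dz g)"] k by simp
  show ?thesis
    unfolding invertible_op_def Q_def[symmetric] T_def[symmetric]
  proof
    assume "bij_betw Q (Hs0 4) L2_0 \<and> (\<exists>C. \<forall>f\<in>Hs0 4. l2norm f \<le> C * l2norm (Q f))"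
    then obtain C where bQ: "bij_betw Q (Hs0 4) L2_0" and C: "\<forall>g\<in>Hs0 4. l2norm g \<le> C * l2norm (Q g)" by blast
    have bT: "bij_betw T (Hs0 3) L2_0" using bQ bijeq by simp
    obtain K1 K2 where K1: "K1 \<ge> 0" and K: "\<forall>f\<in>Hs0 3. T f \<in> L2_0 \<longrightarrow> l2norm f \<le> K1 * l2norm (dzinv f) + K2 * l2norm (T f)"
      using ell unfolding T_def by blast
    have "l2norm f \<le> (K1 * C * k + K2) * l2norm (T f)" if f: "f \<in> Hs0 3" for f
    proof -
      have Tf: "T f \<in> L2_0" using bT f by (rule bij_betw_apply)
      have "l2norm (dzinv f) \<le> C * l2norm (Q (dzinv f))" using C dzinv_Hs[OF f] by blast
      also have "\<dots> = C * (k * l2norm (T f))"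
        using normQ[OF dzinv_Hs[OF f]] dz_dzinv[of f, OF Hs0_zero[OF f]] by simp
      finally have "K1 * l2norm (dzinv f) \<le> K1 * (C * (k * l2norm (T f)))" using K1 by (rule mult_left_mono)
      moreover have "l2norm f \<le> K1 * l2norm (dzinv f) + K2 * l2norm (T f)" using K f Tf by blast
      ultimately show ?thesis by (simp add: algebra_simps)
    qed
    then show "bij_betw T (Hs0 3) L2_0 \<and> (\<exists>C. \<forall>f\<in>Hs0 3. l2norm f \<le> C * l2norm (T f))" using bT by blast
  next
    assume "bij_betw T (Hs0 3) L2_0 \<and> (\<exists>C. \<forall>f\<in>Hs0 3. l2norm f \<le> C * l2norm (T f))"
    then obtain C where bT: "bij_betw T (Hs0 3) L2_0" and C: "\<forall>f\<in>Hs0 3. l2norm f \<le> C * l2norm (T f)" by blast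
    have bQ: "bij_betw Q (Hs0 4) L2_0" using bT bijeq by simp
    have "l2norm g \<le> (C / k) * l2norm (Q g)" if g: "g \<in> Hs0 4" for g
    proof -
      have "l2norm g \<le> l2norm (dz g)" by (rule l2_le_dz[OF g])
      also have "\<dots> \<le> C * l2norm (T (dz g))" using C dz_Hs[OF g] by blast
      also have "\<dots> = (C / k) * l2norm (Q g)" using normQ[OF g] k by simp
      finally show ?thesis .
    qed
    then show "bij_betw Q (Hs0 4) L2_0 \<and> (\<exists>C. \<forall>f\<in>Hs0 4. l2norm f \<le> C * l2norm (Q f))" using bQ by blast
  qed
qed

lemma cont_of_diff:
  assumes "\<And>z. (f::real\<Rightarrow>real) differentiable (at z)"
  shows "continuous_on S (\<lambda>z. complex_of_real (f z))"
proof -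
  have "continuous_on S f"
    by (rule continuous_at_imp_continuous_on) (use assms differentiable_imp_continuous_within in blast)
  then show ?thesis by (intro continuous_intros)
qed

theorem lemma2p1:
  fixes \<rho> \<phi> k \<gamma> :: real
    and w :: "real \<Rightarrow> real \<Rightarrow> real"   (* w a z : the wave profile of amplitude a *)
    and c :: "real \<Rightarrow> real"            (* c a : the wave speed *)
  assumes k_pos: "k > 0"
    and w_smooth: "\<And>a m z. ((deriv ^^ m) (w a)) differentiable (at z)"
    and w_even: "\<And>a z. w a (- z) = w a z"
    and w_periodic: "\<And>a z. w a (z + 2 * pi) = w a z"
    and w_expansion: "\<exists>C. \<forall>a z. \<bar>a\<bar> \<le> 1 \<longrightarrow>
          \<bar>w a z - (a * cos z + a\<^sup>2 * (- 3 * \<rho> / (2 * k\<^sup>2) + \<rho> / (2 * k\<^sup>2) * cos (2 * z))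
                     + a ^ 3 * (- \<phi>\<^sup>2 / (64 * k\<^sup>2) + 3 * \<rho>\<^sup>2 / (16 * k ^ 4)) * cos (3 * z))\<bar>
            \<le> C * a ^ 4"
    and c_expansion: "\<exists>C. \<forall>a. \<bar>a\<bar> \<le> 1 \<longrightarrow>
          \<bar>c a - (k\<^sup>2 + a\<^sup>2 * (3 * \<phi>\<^sup>2 / 8 + 15 * \<rho>\<^sup>2 / (2 * k\<^sup>2)))\<bar> \<le> C * a ^ 4"
  shows "\<exists>a0 > 0. \<forall>a. \<bar>a\<bar> < a0 \<longrightarrow> (\<forall>\<mu> :: complex.
           (\<not> invertible_op (Hs0 4) (Qop k \<rho> \<phi> (w a) (c a) \<mu> \<gamma>))
           \<longleftrightarrow> \<mu> \<in> op_spectrum (Hs0 3) (Hop k \<rho> \<phi> (w a) (c a) \<gamma>))"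
proof (intro exI[of _ 1] conjI allI impI)
  fix a :: real and \<mu> :: complex
  have d0: "\<And>z. w a differentiable (at z)" using w_smooth[where a=a and m=0] by simp
  have d1: "\<And>z. deriv (w a) differentiable (at z)" using w_smooth[where a=a and m=1] by simp
  have d2: "\<And>z. (\<lambda>x. (w a x)\<^sup>2) differentiable (at z)"
    using d0 by (intro derivative_intros) auto
  obtain G0 where G0: "G0 \<ge> 0" "\<And>j. norm (fcoef (\<lambda>z. complex_of_real (w a z)) j) \<le> G0"
    using fcoef_bound[OF cont_of_diff[OF d0]] by blast
  obtain G1 where G1: "G1 \<ge> 0" "\<And>j. norm (fcoef (\<lambda>z. complex_of_real ((w a z)\<^sup>2)) j) \<le> G1"
    using fcoef_bound[OF cont_of_diff[OF d2]] by blast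
  obtain G2 where G2: "G2 \<ge> 0" "\<And>j. norm (fcoef (\<lambda>z. complex_of_real (deriv (w a) z)) j) \<le> G2"
    using fcoef_bound[OF cont_of_diff[OF d1]] by blast
  have ell: "\<exists>K1 K2. K1 \<ge> 0 \<and> (\<forall>f\<in>Hs0 3. (\<lambda>n. \<mu> * f n - Hop k \<rho> \<phi> (w a) (c a) \<gamma> f n) \<in> L2_0 \<longrightarrow>
           l2norm f \<le> K1 * l2norm (dzinv f) + K2 * l2norm (\<lambda>n. \<mu> * f n - Hop k \<rho> \<phi> (w a) (c a) \<gamma> f n))"
    by (rule elliptic[OF k_pos G0(2,1) G1(2,1) G2(2,1)])
  show "(\<not> invertible_op (Hs0 4) (Qop k \<rho> \<phi> (w a) (c a) \<mu> \<gamma>))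
           \<longleftrightarrow> \<mu> \<in> op_spectrum (Hs0 3) (Hop k \<rho> \<phi> (w a) (c a) \<gamma>)"
    unfolding op_spectrum_def using inv_equiv[OF k_pos ell] by simp
qed simp

end
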